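(* Let $N$ be finite, $\mathbf{P}$ stochastic on $N$, $0<\beta<1$, $\mathbf{R}\in\mathbb{R}^N$, $S\subseteq N$ and $\nu\in\mathbb R$. For every stopping rule $\tau$ and every $i\in N$: (a) $g_i^\tau=g_i^S-\sum_{j\in S}w_j^Sx_{ij}^{0,\tau}+\sum_{j\in S^c}w_j^Sx_{ij}^{1,\tau}$; (b) $f_i^\tau=f_i^S-\sum_{j\in S}r_j^Sx_{ij}^{0,\tau}+\sum_{j\in S^c}r_j^Sx_{ij}^{1,\tau}$; (c) $f_i^\tau-\nu g_i^\tau=f_i^S-\nu g_i^S-\sum_{j\in S}(r_j^S-\nu w_j^S)x_{ij}^{0,\tau}+\sum_{j\in S^c}(r_j^S-\nu w_j^S)x_{ij}^{1,\tau}$.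
   Context: $N$ is a finite state set, $\mathbf{P}=(p_{ij})$ stochastic, $\beta\in(0,1)$, $\mathbf{R}=(R_j)$; $X(t)$ is the Markov chain with matrix $\mathbf{P}$, $\mathsf{E}_i$ is expectation given $X(0)=i$, $S^c=N\setminus S$. A stopping rule is a (possibly randomized) stopping time $\tau\in\{0,1,\dots\}\cup\{\infty\}$ for the chain's history. Define $f_i^\tau=\mathsf{E}_i[\sum_{t=0}^{\tau-1}R_{X(t)}\beta^t]$, $g_i^\tau=\mathsf{E}_i[\sum_{t=0}^{\tau-1}\beta^t]$, and occupancy measures $x_{ij}^{1,\tau}=\mathsf{E}_i[\sum_{t=0}^{\tau-1}1_{\{X(t)=j\}}\beta^t]$ and $x_{ij}^{0,\tau}=\mathsf{E}_i[1_{\{\tau<\infty,X(\tau)=j\}}\beta^\tau]/(1-\beta)$ (the discounted time spent passive at $j$ when, after stopping, the chain remains frozen at $X(\tau)$ forever). For $S\subseteq N$ let $\tau_S=\min\{t\ge0:X(t)\notin S\}$, $f_i^S=f_i^{\tau_S}$, $g_i^S=g_i^{\tau_S}$, and $$w_i^S=1+\beta\sum_{j}p_{ij}g_j^S-\beta g_i^S,\qquad r_i^S=R_i+\beta\sum_jp_{ij}f_j^S-\beta f_i^S.$$ *)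

theory Defs
  imports Complex_Main
begin

definition stochastic :: "('n::finite \<Rightarrow> 'n \<Rightarrow> real) \<Rightarrow> bool" where
  "stochastic P \<longleftrightarrow> (\<forall>i j. 0 \<le> P i j) \<and> (\<forall>i. (\<Sum>j\<in>UNIV. P i j) = 1)"

text \<open>A (possibly randomized) stopping rule, in behavioural form: q h is the conditional
  probability of stopping at time t given the history h = [X(0),...,X(t)] and that the
  rule has not stopped before time t.\<close>

definition stopping_rule :: "('n list \<Rightarrow> real) \<Rightarrow> bool" where
  "stopping_rule q \<longleftrightarrow> (\<forall>h. 0 \<le> q h \<and> q h \<le> 1)"

text \<open>Probability of the path X(1..t) given X(0) = hd h.\<close>
fun path_prob :: "('n \<Rightarrow> 'n \<Rightarrow> real) \<Rightarrow> 'n list \<Rightarrow> real" where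
  "path_prob P [] = 1"
| "path_prob P [x] = 1"
| "path_prob P (x # y # xs) = P x y * path_prob P (y # xs)"

text \<open>Histories of length t+1 (times 0..t) starting at i.\<close>
definition histories :: "'n \<Rightarrow> nat \<Rightarrow> 'n list set" where
  "histories i t = {h. length h = Suc t \<and> hd h = i}"

text \<open>P_i(X(0..t) = h and tau >= t)\<close>
definition reach :: "('n \<Rightarrow> 'n \<Rightarrow> real) \<Rightarrow> ('n list \<Rightarrow> real) \<Rightarrow> 'n list \<Rightarrow> real" where
  "reach P q h = path_prob P h * (\<Prod>k<length h - 1. 1 - q (take (Suc k) h))"

text \<open>P_i(X(0..t) = h and tau > t)\<close>
definition cont :: "('n \<Rightarrow> 'n \<Rightarrow> real) \<Rightarrow> ('n list \<Rightarrow> real) \<Rightarrow> 'n list \<Rightarrow> real" where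
  "cont P q h = reach P q h * (1 - q h)"

text \<open>P_i(X(0..t) = h and tau = t)\<close>
definition stopp :: "('n \<Rightarrow> 'n \<Rightarrow> real) \<Rightarrow> ('n list \<Rightarrow> real) \<Rightarrow> 'n list \<Rightarrow> real" where
  "stopp P q h = reach P q h * q h"

text \<open>f_i^tau = E_i[ sum_{t<tau} R(X t) beta^t ]\<close>
definition f_val :: "('n::finite \<Rightarrow> 'n \<Rightarrow> real) \<Rightarrow> real \<Rightarrow> ('n \<Rightarrow> real) \<Rightarrow> ('n list \<Rightarrow> real) \<Rightarrow> 'n \<Rightarrow> real" where
  "f_val P \<beta> R q i = (\<Sum>t. \<beta> ^ t * (\<Sum>h\<in>histories i t. cont P q h * R (last h)))"

text \<open>g_i^tau = E_i[ sum_{t<tau} beta^t ]\<close>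
definition g_val :: "('n::finite \<Rightarrow> 'n \<Rightarrow> real) \<Rightarrow> real \<Rightarrow> ('n list \<Rightarrow> real) \<Rightarrow> 'n \<Rightarrow> real" where
  "g_val P \<beta> q i = (\<Sum>t. \<beta> ^ t * (\<Sum>h\<in>histories i t. cont P q h))"

text \<open>x_{ij}^{1,tau} = E_i[ sum_{t<tau} 1{X t = j} beta^t ]\<close>
definition x1 :: "('n::finite \<Rightarrow> 'n \<Rightarrow> real) \<Rightarrow> real \<Rightarrow> ('n list \<Rightarrow> real) \<Rightarrow> 'n \<Rightarrow> 'n \<Rightarrow> real" where
  "x1 P \<beta> q i j = (\<Sum>t. \<beta> ^ t * (\<Sum>h\<in>histories i t. if last h = j then cont P q h else 0))"

text \<open>x_{ij}^{0,tau} = E_i[ 1{tau < inf, X tau = j} beta^tau ] / (1 - beta)\<close>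
definition x0 :: "('n::finite \<Rightarrow> 'n \<Rightarrow> real) \<Rightarrow> real \<Rightarrow> ('n list \<Rightarrow> real) \<Rightarrow> 'n \<Rightarrow> 'n \<Rightarrow> real" where
  "x0 P \<beta> q i j = (\<Sum>t. \<beta> ^ t * (\<Sum>h\<in>histories i t. if last h = j then stopp P q h else 0)) / (1 - \<beta>)"

text \<open>tau_S = min{t. X t \<notin> S}: stop exactly when the current state leaves S.\<close>
definition exit_rule :: "'n set \<Rightarrow> 'n list \<Rightarrow> real" where
  "exit_rule S h = (if last h \<in> S then 0 else 1)"

definition fS :: "('n::finite \<Rightarrow> 'n \<Rightarrow> real) \<Rightarrow> real \<Rightarrow> ('n \<Rightarrow> real) \<Rightarrow> 'n set \<Rightarrow> 'n \<Rightarrow> real" where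
  "fS P \<beta> R S i = f_val P \<beta> R (exit_rule S) i"

definition gS :: "('n::finite \<Rightarrow> 'n \<Rightarrow> real) \<Rightarrow> real \<Rightarrow> 'n set \<Rightarrow> 'n \<Rightarrow> real" where
  "gS P \<beta> S i = g_val P \<beta> (exit_rule S) i"

definition wS :: "('n::finite \<Rightarrow> 'n \<Rightarrow> real) \<Rightarrow> real \<Rightarrow> 'n set \<Rightarrow> 'n \<Rightarrow> real" where
  "wS P \<beta> S i = 1 + \<beta> * (\<Sum>j\<in>UNIV. P i j * gS P \<beta> S j) - \<beta> * gS P \<beta> S i"

definition rS :: "('n::finite \<Rightarrow> 'n \<Rightarrow> real) \<Rightarrow> real \<Rightarrow> ('n \<Rightarrow> real) \<Rightarrow> 'n set \<Rightarrow> 'n \<Rightarrow> real" where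
  "rS P \<beta> R S i = R i + \<beta> * (\<Sum>j\<in>UNIV. P i j * fS P \<beta> R S j) - \<beta> * fS P \<beta> R S i"

end

theory Submission
  imports Defs
begin

lemma hist_finite: "finite (histories (i::'n::finite) t)"
proof -
  have "histories i t \<subseteq> {xs. set xs \<subseteq> UNIV \<and> length xs = Suc t}"
    by (auto simp: histories_def)
  thus ?thesis using finite_lists_length_eq[of "UNIV::'n set" "Suc t"] finite_subset by auto
qed

lemma hist_0: "histories i 0 = {[i]}"
  by (auto simp: histories_def length_Suc_conv)

lemma hist_nonempty: "h \<in> histories i t \<Longrightarrow> h \<noteq> []"
  by (auto simp: histories_def)

lemma hist_Suc_snoc: "histories i (Suc t) = (\<lambda>(h,j). h @ [j]) ` (histories i t \<times> UNIV)"
proof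
  show "histories i (Suc t) \<subseteq> (\<lambda>(h,j). h @ [j]) ` (histories i t \<times> UNIV)"
  proof
    fix h assume h: "h \<in> histories i (Suc t)"
    obtain ys y where e: "h = ys @ [y]" using h by (cases h rule: rev_exhaust) (auto simp: histories_def)
    have "ys \<noteq> []" using h e by (auto simp: histories_def)
    hence "ys \<in> histories i t" using h e by (auto simp: histories_def hd_append)
    thus "h \<in> (\<lambda>(h,j). h @ [j]) ` (histories i t \<times> UNIV)" using e by auto
  qed
next
  show "(\<lambda>(h,j). h @ [j]) ` (histories i t \<times> UNIV) \<subseteq> histories i (Suc t)"
    by (auto simp: histories_def hd_append)
qed

lemma sum_hist_snoc:
  "(\<Sum>h\<in>histories (i::'n::finite) (Suc t). F h) = (\<Sum>h\<in>histories i t. \<Sum>j\<in>UNIV. F (h @ [j]))"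
proof -
  have inj: "inj_on (\<lambda>(h,j). h @ [j]) (histories i t \<times> (UNIV::'n set))"
    by (auto simp: inj_on_def)
  have "(\<Sum>h\<in>histories i (Suc t). F h) = (\<Sum>(h,j)\<in>histories i t \<times> UNIV. F (h @ [j]))"
    unfolding hist_Suc_snoc by (subst sum.reindex[OF inj]) (simp add: case_prod_unfold)
  also have "\<dots> = (\<Sum>h\<in>histories i t. \<Sum>j\<in>UNIV. F (h @ [j]))"
    by (rule sum.cartesian_product[symmetric])
  finally show ?thesis .
qed

lemma hist_Suc_cons: "histories j (Suc t) = (\<lambda>(k,h). j # h) ` (SIGMA k:UNIV. histories k t)"
proof
  show "histories j (Suc t) \<subseteq> (\<lambda>(k,h). j # h) ` (SIGMA k:UNIV. histories k t)"
  proof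
    fix h assume h: "h \<in> histories j (Suc t)"
    obtain h' where e: "h = j # h'" using h by (cases h) (auto simp: histories_def)
    have "h' \<in> histories (hd h') t" using h e by (auto simp: histories_def)
    thus "h \<in> (\<lambda>(k,h). j # h) ` (SIGMA k:UNIV. histories k t)" using e by force
  qed
next
  show "(\<lambda>(k,h). j # h) ` (SIGMA k:UNIV. histories k t) \<subseteq> histories j (Suc t)"
    by (auto simp: histories_def)
qed

lemma sum_hist_cons:
  "(\<Sum>h\<in>histories (j::'n::finite) (Suc t). F h) = (\<Sum>k\<in>UNIV. \<Sum>h\<in>histories k t. F (j # h))"
proof -
  have inj: "inj_on (\<lambda>(k,h). j # h) (SIGMA k:(UNIV::'n set). histories k t)"
    by (auto simp: inj_on_def histories_def)
  have "(\<Sum>h\<in>histories j (Suc t). F h) = (\<Sum>(k,h)\<in>(SIGMA k:UNIV. histories k t). F (j # h))"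
    unfolding hist_Suc_cons by (subst sum.reindex[OF inj]) (simp add: case_prod_unfold)
  also have "\<dots> = (\<Sum>k\<in>UNIV. \<Sum>h\<in>histories k t. F (j # h))"
    by (rule sum.Sigma[symmetric]) (auto simp: hist_finite)
  finally show ?thesis .
qed

lemma path_prob_snoc: "h \<noteq> [] \<Longrightarrow> path_prob P (h @ [j]) = path_prob P h * P (last h) j"
  by (induction P h rule: path_prob.induct) auto

lemma path_prob_cons: "h \<noteq> [] \<Longrightarrow> path_prob P (j # h) = P j (hd h) * path_prob P h"
  by (cases h) auto

lemma path_prob_nonneg: "(\<forall>a b. 0 \<le> P a b) \<Longrightarrow> 0 \<le> path_prob P h"
  by (induction P h rule: path_prob.induct) auto

lemma reach_snoc:
  assumes "h \<noteq> []" shows "reach P q (h @ [j]) = cont P q h * P (last h) j"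
proof -
  obtain n where n: "length h = Suc n" using assms by (cases h) auto
  have "(\<Prod>k<length (h@[j]) - 1. 1 - q (take (Suc k) (h @ [j]))) = (\<Prod>k<Suc n. 1 - q (take (Suc k) h))"
    using n by (intro prod.cong) auto
  also have "\<dots> = (\<Prod>k<n. 1 - q (take (Suc k) h)) * (1 - q h)" using n by simp
  finally show ?thesis using n assms by (simp add: reach_def cont_def path_prob_snoc mult_ac)
qed

lemma reach_single: "reach P q [i] = 1"
  by (simp add: reach_def)

lemma reach_cons_exit:
  assumes "h \<noteq> []"
  shows "reach P (exit_rule S) (j # h) = P j (hd h) * (1 - exit_rule S [j]) * reach P (exit_rule S) h"
proof -
  obtain n where n: "length h = Suc n" using assms by (cases h) auto
  have "(\<Prod>k<length (j#h) - 1. 1 - exit_rule S (take (Suc k) (j # h)))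
      = (\<Prod>k<Suc n. 1 - exit_rule S (take (Suc k) (j # h)))" using n by simp
  also have "\<dots> = (1 - exit_rule S [j]) * (\<Prod>k<n. 1 - exit_rule S (take (Suc (Suc k)) (j # h)))"
    by (subst prod.lessThan_Suc_shift) simp
  also have "(\<Prod>k<n. 1 - exit_rule S (take (Suc (Suc k)) (j # h))) = (\<Prod>k<n. 1 - exit_rule S (take (Suc k) h))"
    using assms by (intro prod.cong) (auto simp: exit_rule_def)
  finally show ?thesis using n assms by (simp add: reach_def path_prob_cons mult_ac)
qed

lemma cont_cons_exit:
  assumes "h \<noteq> []"
  shows "cont P (exit_rule S) (j # h) = P j (hd h) * (1 - exit_rule S [j]) * cont P (exit_rule S) h"
  using assms by (simp add: cont_def reach_cons_exit exit_rule_def)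

lemma reach_nonneg:
  assumes "stochastic P" "stopping_rule q" shows "0 \<le> reach P q h"
  using assms unfolding reach_def stochastic_def stopping_rule_def
  by (intro mult_nonneg_nonneg path_prob_nonneg prod_nonneg) auto

lemma cont_le:
  assumes "stochastic P" "stopping_rule q" shows "0 \<le> cont P q h" "cont P q h \<le> reach P q h"
  using reach_nonneg[OF assms, of h] assms(2) unfolding cont_def stopping_rule_def
  by (auto simp: mult_left_le)

lemma stopp_le:
  assumes "stochastic P" "stopping_rule q" shows "0 \<le> stopp P q h" "stopp P q h \<le> reach P q h"
  using reach_nonneg[OF assms, of h] assms(2) unfolding stopp_def stopping_rule_def
  by (auto simp: mult_left_le)

lemma exit_stopping: "stopping_rule (exit_rule S)"
  by (simp add: stopping_rule_def exit_rule_def)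

lemma reach_sum_le:
  assumes "stochastic P" "stopping_rule q"
  shows "(\<Sum>h\<in>histories (i::'n::finite) t. reach P q h) \<le> 1"
proof (induction t)
  case 0 thus ?case by (simp add: hist_0 reach_single)
next
  case (Suc t)
  have "(\<Sum>h\<in>histories i (Suc t). reach P q h) = (\<Sum>h\<in>histories i t. \<Sum>j\<in>UNIV. cont P q h * P (last h) j)"
    by (simp add: sum_hist_snoc reach_snoc hist_nonempty cong: sum.cong)
  also have "\<dots> = (\<Sum>h\<in>histories i t. cont P q h)"
    using assms(1) by (simp add: sum_distrib_left[symmetric] stochastic_def)
  also have "\<dots> \<le> (\<Sum>h\<in>histories i t. reach P q h)"
    by (rule sum_mono) (rule cont_le[OF assms])
  finally show ?case using Suc by linarith
qed

lemma hist_bound: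
  assumes "stochastic P" "stopping_rule q" and c: "\<And>h. \<bar>c h\<bar> \<le> reach P q h"
  shows "\<bar>\<Sum>h\<in>histories (i::'n::finite) t. c h * \<psi> (last h)\<bar> \<le> (\<Sum>l\<in>UNIV. \<bar>\<psi> l\<bar>)"
proof -
  define M where "M = (\<Sum>l\<in>UNIV. \<bar>\<psi> l\<bar>)"
  have psiM: "\<bar>\<psi> x\<bar> \<le> M" for x unfolding M_def by (rule member_le_sum) auto
  have M0: "0 \<le> M" unfolding M_def by (simp add: sum_nonneg)
  have "\<bar>\<Sum>h\<in>histories i t. c h * \<psi> (last h)\<bar> \<le> (\<Sum>h\<in>histories i t. \<bar>c h\<bar> * \<bar>\<psi> (last h)\<bar>)"
    by (metis (no_types, lifting) abs_mult sum.cong sum_abs)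
  also have "\<dots> \<le> (\<Sum>h\<in>histories i t. reach P q h * M)"
    by (intro sum_mono mult_mono c psiM) (auto intro: reach_nonneg[OF assms(1,2)])
  also have "\<dots> = (\<Sum>h\<in>histories i t. reach P q h) * M" by (simp add: sum_distrib_right)
  also have "\<dots> \<le> 1 * M" by (intro mult_right_mono reach_sum_le assms M0)
  finally show ?thesis by (simp add: M_def)
qed

definition Vs :: "real \<Rightarrow> ('n::finite list \<Rightarrow> real) \<Rightarrow> 'n \<Rightarrow> ('n \<Rightarrow> real) \<Rightarrow> real" where
  "Vs \<beta> c i \<psi> = (\<Sum>t. \<beta> ^ t * (\<Sum>h\<in>histories i t. c h * \<psi> (last h)))"

lemma Vs_summable:
  assumes "stochastic P" "stopping_rule q" and c: "\<And>h. \<bar>c h\<bar> \<le> reach P q h"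
    and "0 \<le> \<beta>" "\<beta> < 1"
  shows "summable (\<lambda>t. \<beta> ^ t * (\<Sum>h\<in>histories (i::'n::finite) t. c h * \<psi> (last h)))"
proof (rule summable_comparison_test)
  show "summable (\<lambda>t. (\<Sum>l\<in>UNIV. \<bar>\<psi> l\<bar>) * \<beta> ^ t)"
    using assms by (intro summable_mult summable_geometric) auto
  show "\<exists>N. \<forall>n\<ge>N. norm (\<beta> ^ n * (\<Sum>h\<in>histories i n. c h * \<psi> (last h))) \<le> (\<Sum>l\<in>UNIV. \<bar>\<psi> l\<bar>) * \<beta> ^ n"
    using hist_bound[OF assms(1,2) c] assms(4)
    by (auto simp: abs_mult mult.commute intro!: mult_left_mono)
qed

lemma telescope:
  assumes P: "stochastic P" and q: "stopping_rule q" and b: "0 \<le> \<beta>" "\<beta> < 1"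
  shows "\<phi> (i::'n::finite) = Vs \<beta> (cont P q) i (\<lambda>l. \<phi> l - \<beta> * (\<Sum>k\<in>UNIV. P l k * \<phi> k))
                + Vs \<beta> (stopp P q) i \<phi>"
proof -
  define \<psi> where "\<psi> l = \<phi> l - \<beta> * (\<Sum>k\<in>UNIV. P l k * \<phi> k)" for l
  define A where "A t = \<beta>^t * (\<Sum>h\<in>histories i t. reach P q h * \<phi> (last h))" for t
  define T1 where "T1 t = \<beta>^t * (\<Sum>h\<in>histories i t. cont P q h * \<psi> (last h))" for t
  define T2 where "T2 t = \<beta>^t * (\<Sum>h\<in>histories i t. stopp P q h * \<phi> (last h))" for t
  have AS: "(\<Sum>h\<in>histories i (Suc t). reach P q h * \<phi> (last h))
          = (\<Sum>h\<in>histories i t. cont P q h * (\<Sum>k\<in>UNIV. P (last h) k * \<phi> k))" for t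
    by (simp add: sum_hist_snoc reach_snoc hist_nonempty sum_distrib_left mult_ac cong: sum.cong)
  have step: "T1 t + T2 t = A t - A (Suc t)" for t
  proof -
    have "(\<Sum>h\<in>histories i t. cont P q h * \<psi> (last h)) + (\<Sum>h\<in>histories i t. stopp P q h * \<phi> (last h))
        = (\<Sum>h\<in>histories i t. reach P q h * \<phi> (last h) - \<beta> * (cont P q h * (\<Sum>k\<in>UNIV. P (last h) k * \<phi> k)))"
      unfolding sum.distrib[symmetric]
      by (rule sum.cong) (auto simp: cont_def stopp_def \<psi>_def algebra_simps)
    also have "\<dots> = (\<Sum>h\<in>histories i t. reach P q h * \<phi> (last h))
                 - \<beta> * (\<Sum>h\<in>histories i (Suc t). reach P q h * \<phi> (last h))"
      by (simp add: AS sum_subtractf sum_distrib_left)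
    finally have e: "(\<Sum>h\<in>histories i t. cont P q h * \<psi> (last h)) + (\<Sum>h\<in>histories i t. stopp P q h * \<phi> (last h))
       = (\<Sum>h\<in>histories i t. reach P q h * \<phi> (last h))
                 - \<beta> * (\<Sum>h\<in>histories i (Suc t). reach P q h * \<phi> (last h))" .
    have "T1 t + T2 t = \<beta>^t * ((\<Sum>h\<in>histories i t. cont P q h * \<psi> (last h)) + (\<Sum>h\<in>histories i t. stopp P q h * \<phi> (last h)))"
      by (simp add: T1_def T2_def distrib_left)
    also have "\<dots> = A t - A (Suc t)" unfolding e A_def by (simp add: right_diff_distrib mult_ac)
    finally show ?thesis .
  qed
  have A0: "A 0 = \<phi> i" by (simp add: A_def hist_0 reach_single)
  have As: "summable A" unfolding A_def
    by (rule Vs_summable[OF P q _ b]) (simp add: reach_nonneg[OF P q])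
  have Alim: "A \<longlonglongrightarrow> 0" by (rule summable_LIMSEQ_zero[OF As])
  have "(\<lambda>n. \<Sum>t<n. T1 t + T2 t) = (\<lambda>n. \<phi> i - A n)"
    by (simp add: step sum_lessThan_telescope' A0)
  moreover have "(\<lambda>n. \<phi> i - A n) \<longlonglongrightarrow> \<phi> i - 0" by (intro tendsto_intros Alim)
  ultimately have "(\<lambda>t. T1 t + T2 t) sums \<phi> i" by (simp add: sums_def)
  hence "\<phi> i = (\<Sum>t. T1 t + T2 t)" by (simp add: sums_iff)
  also have "\<dots> = (\<Sum>t. T1 t) + (\<Sum>t. T2 t)"
  proof (rule suminf_add[symmetric])
    show "summable T1" unfolding T1_def
      by (rule Vs_summable[OF P q _ b]) (use cont_le[OF P q] in auto)
    show "summable T2" unfolding T2_def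
      by (rule Vs_summable[OF P q _ b]) (use stopp_le[OF P q] in auto)
  qed
  finally show ?thesis unfolding T1_def T2_def Vs_def \<psi>_def .
qed

lemma Vs_linear:
  assumes P: "stochastic P" and q: "stopping_rule q" and c: "\<And>h. \<bar>c h\<bar> \<le> reach P q h"
    and b: "0 \<le> \<beta>" "\<beta> < 1"
  shows "Vs \<beta> c (i::'n::finite) \<psi> = (\<Sum>j\<in>UNIV. \<psi> j * Vs \<beta> c i (\<lambda>l. if l = j then 1 else 0))"
proof -
  define X where "X j t = \<beta>^t * (\<Sum>h\<in>histories i t. c h * (if last h = j then 1 else 0))" for j t
  have inner: "\<beta>^t * (\<Sum>h\<in>histories i t. c h * \<psi> (last h)) = (\<Sum>j\<in>UNIV. \<psi> j * X j t)" for t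
  proof -
    have "(\<Sum>j\<in>UNIV. \<psi> j * (\<Sum>h\<in>histories i t. c h * (if last h = j then 1 else 0)))
        = (\<Sum>h\<in>histories i t. \<Sum>j\<in>UNIV. \<psi> j * (c h * (if last h = j then 1 else 0)))"
      by (simp add: sum_distrib_left sum.swap[of _ UNIV])
    also have "\<dots> = (\<Sum>h\<in>histories i t. c h * \<psi> (last h))"
      by (rule sum.cong) (auto simp: if_distrib cong: if_cong)
    finally have e: "(\<Sum>j\<in>UNIV. \<psi> j * (\<Sum>h\<in>histories i t. c h * (if last h = j then 1 else 0)))
        = (\<Sum>h\<in>histories i t. c h * \<psi> (last h))" .
    have "(\<Sum>j\<in>UNIV. \<psi> j * X j t) = \<beta>^t * (\<Sum>j\<in>UNIV. \<psi> j * (\<Sum>h\<in>histories i t. c h * (if last h = j then 1 else 0)))"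
      unfolding X_def by (simp add: sum_distrib_left mult.left_commute)
    thus ?thesis unfolding e by simp
  qed
  have sX: "summable (X j)" for j unfolding X_def by (rule Vs_summable[OF P q c b])
  have "Vs \<beta> c i \<psi> = (\<Sum>t. \<Sum>j\<in>UNIV. \<psi> j * X j t)" unfolding Vs_def inner ..
  also have "\<dots> = (\<Sum>j\<in>UNIV. \<Sum>t. \<psi> j * X j t)"
    by (rule suminf_sum) (intro summable_mult sX)
  also have "\<dots> = (\<Sum>j\<in>UNIV. \<psi> j * (\<Sum>t. X j t))"
    by (intro sum.cong refl suminf_mult sX)
  finally show ?thesis unfolding X_def Vs_def by simp
qed

lemma bellman:
  assumes P: "stochastic P" and b: "0 \<le> \<beta>" "\<beta> < 1"
  shows "Vs \<beta> (cont P (exit_rule S)) (j::'n::finite) \<psi>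
     = (1 - exit_rule S [j]) * (\<psi> j + \<beta> * (\<Sum>k\<in>UNIV. P j k * Vs \<beta> (cont P (exit_rule S)) k \<psi>))"
proof -
  define E where "E = exit_rule S"
  define a where "a j t = (\<Sum>h\<in>histories j t. cont P E h * \<psi> (last h))" for j t
  have a0: "a j 0 = (1 - E [j]) * \<psi> j" for j
    by (simp add: a_def hist_0 cont_def reach_single)
  have aS: "a j (Suc t) = (1 - E [j]) * (\<Sum>k\<in>UNIV. P j k * a k t)" for j t
  proof -
    have "a j (Suc t) = (\<Sum>k\<in>UNIV. \<Sum>h\<in>histories k t. cont P E (j # h) * \<psi> (last (j # h)))"
      unfolding a_def by (rule sum_hist_cons)
    also have "\<dots> = (\<Sum>k\<in>UNIV. \<Sum>h\<in>histories k t. (1 - E [j]) * (P j k * (cont P E h * \<psi> (last h))))"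
      unfolding E_def
      by (intro sum.cong refl) (auto simp: cont_cons_exit hist_nonempty histories_def mult_ac)
    also have "\<dots> = (1 - E [j]) * (\<Sum>k\<in>UNIV. P j k * a k t)"
      by (simp add: a_def sum_distrib_left)
    finally show ?thesis .
  qed
  have sa: "summable (\<lambda>t. \<beta>^t * a k t)" for k unfolding a_def E_def
    by (rule Vs_summable[OF P exit_stopping _ b]) (use cont_le[OF P exit_stopping] in auto)
  have V: "Vs \<beta> (cont P E) k \<psi> = (\<Sum>t. \<beta>^t * a k t)" for k by (simp add: Vs_def a_def)
  have "(\<Sum>t. \<beta>^Suc t * a j (Suc t)) = (\<Sum>t. \<beta>^t * a j t) - a j 0"
    using suminf_split_head[OF sa[of j]] by simp
  moreover have "(\<Sum>t. \<beta>^Suc t * a j (Suc t)) = (\<Sum>t. (1 - E [j]) * \<beta> * (\<Sum>k\<in>UNIV. P j k * (\<beta>^t * a k t)))"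
    by (simp add: aS sum_distrib_left mult_ac)
  moreover have "\<dots> = (1 - E [j]) * \<beta> * (\<Sum>t. \<Sum>k\<in>UNIV. P j k * (\<beta>^t * a k t))"
    by (rule suminf_mult) (intro summable_sum summable_mult sa)
  moreover have "(\<Sum>t. \<Sum>k\<in>UNIV. P j k * (\<beta>^t * a k t)) = (\<Sum>k\<in>UNIV. P j k * (\<Sum>t. \<beta>^t * a k t))"
    by (subst suminf_sum) (auto intro: summable_mult sa simp: suminf_mult sa)
  ultimately show ?thesis unfolding V E_def[symmetric] by (simp add: a0 algebra_simps)
qed

lemma sum_split_compl: "sum f (UNIV::'n::finite set) = sum f S + sum f (-S)"
proof -
  have "sum f (S \<union> -S) = sum f S + sum f (-S)" by (rule sum.union_disjoint) auto
  thus ?thesis by simp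
qed

lemma main_f:
  fixes P :: "'n::finite \<Rightarrow> 'n \<Rightarrow> real"
  assumes P: "stochastic P" and q: "stopping_rule q" and b: "0 < \<beta>" "\<beta> < 1"
  shows "f_val P \<beta> R q i = fS P \<beta> R S i - (\<Sum>j\<in>S. rS P \<beta> R S j * x0 P \<beta> q i j)
                                         + (\<Sum>j\<in>-S. rS P \<beta> R S j * x1 P \<beta> q i j)"
proof -
  have b0: "0 \<le> \<beta>" using b by simp
  define E where "E = exit_rule S"
  define F where "F j = fS P \<beta> R S j" for j
  define PF where "PF j = (\<Sum>k\<in>UNIV. P j k * F k)" for j
  define ind where "ind j = (\<lambda>l::'n. if l = j then (1::real) else 0)" for j
  define X1 where "X1 j = x1 P \<beta> q i j" for j
  define X0 where "X0 j = x0 P \<beta> q i j" for j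
  have FV: "F j = Vs \<beta> (cont P E) j R" for j
    by (simp add: F_def fS_def f_val_def Vs_def E_def mult_ac)
  have x1eq: "X1 j = Vs \<beta> (cont P q) i (ind j)" for j
    unfolding X1_def x1_def Vs_def ind_def by (intro suminf_cong arg_cong2[where f="(*)"] refl sum.cong) auto
  have x0eq: "(1 - \<beta>) * X0 j = Vs \<beta> (stopp P q) i (ind j)" for j
  proof -
    have "(\<Sum>t. \<beta> ^ t * (\<Sum>h\<in>histories i t. if last h = j then stopp P q h else 0)) = Vs \<beta> (stopp P q) i (ind j)"
      unfolding Vs_def ind_def by (intro suminf_cong arg_cong2[where f="(*)"] refl sum.cong) auto
    thus ?thesis using b unfolding X0_def x0_def by simp
  qed
  have FB: "F j = (1 - E [j]) * (R j + \<beta> * PF j)" for j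
    unfolding FV PF_def E_def by (rule bellman[OF P b0 b(2)])
  have r: "rS P \<beta> R S j = R j + \<beta> * PF j - \<beta> * F j" for j
    by (simp add: rS_def PF_def F_def)
  have cb: "\<And>h. \<bar>cont P q h\<bar> \<le> reach P q h" using cont_le[OF P q] by auto
  have sb: "\<And>h. \<bar>stopp P q h\<bar> \<le> reach P q h" using stopp_le[OF P q] by auto
  have fv: "f_val P \<beta> R q i = (\<Sum>j\<in>UNIV. R j * X1 j)"
  proof -
    have "f_val P \<beta> R q i = Vs \<beta> (cont P q) i R" by (simp add: f_val_def Vs_def)
    also have "\<dots> = (\<Sum>j\<in>UNIV. R j * X1 j)"
      by (subst Vs_linear[OF P q cb b0 b(2)]) (simp add: x1eq ind_def)
    finally show ?thesis .
  qed
  have tel: "F i = (\<Sum>j\<in>UNIV. (F j - \<beta> * PF j) * X1 j) + (\<Sum>j\<in>UNIV. F j * ((1 - \<beta>) * X0 j))"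
  proof -
    have "F i = Vs \<beta> (cont P q) i (\<lambda>l. F l - \<beta> * PF l) + Vs \<beta> (stopp P q) i F"
      unfolding PF_def by (rule telescope[OF P q b0 b(2)])
    also have "\<dots> = (\<Sum>j\<in>UNIV. (F j - \<beta> * PF j) * X1 j) + (\<Sum>j\<in>UNIV. F j * ((1 - \<beta>) * X0 j))"
      by (subst Vs_linear[OF P q cb b0 b(2)], subst Vs_linear[OF P q sb b0 b(2)])
         (simp add: x1eq x0eq ind_def)
    finally show ?thesis .
  qed
  have eS: "(\<Sum>j\<in>S. R j * X1 j) = (\<Sum>j\<in>S. (F j - \<beta> * PF j) * X1 j + F j * ((1 - \<beta>) * X0 j))
                 - (\<Sum>j\<in>S. rS P \<beta> R S j * X0 j)"
    unfolding sum_subtractf[symmetric]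
    by (rule sum.cong) (auto simp: FB r E_def exit_rule_def algebra_simps)
  have eC: "(\<Sum>j\<in>-S. R j * X1 j) = (\<Sum>j\<in>-S. (F j - \<beta> * PF j) * X1 j + F j * ((1 - \<beta>) * X0 j))
                 + (\<Sum>j\<in>-S. rS P \<beta> R S j * X1 j)"
    unfolding sum.distrib[symmetric]
    by (rule sum.cong) (auto simp: FB r E_def exit_rule_def algebra_simps)
  have "f_val P \<beta> R q i = (\<Sum>j\<in>S. R j * X1 j) + (\<Sum>j\<in>-S. R j * X1 j)"
    unfolding fv by (rule sum_split_compl)
  moreover have "F i = (\<Sum>j\<in>S. (F j - \<beta> * PF j) * X1 j + F j * ((1 - \<beta>) * X0 j))
                     + (\<Sum>j\<in>-S. (F j - \<beta> * PF j) * X1 j + F j * ((1 - \<beta>) * X0 j))"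
    unfolding tel sum.distrib[symmetric] by (rule sum_split_compl)
  ultimately show ?thesis using eS eC unfolding F_def X0_def X1_def by linarith
qed

theorem proposition3:
  fixes P :: "'n::finite \<Rightarrow> 'n \<Rightarrow> real" and \<beta> \<nu> :: real and R :: "'n \<Rightarrow> real"
    and S :: "'n set" and q :: "'n list \<Rightarrow> real" and i :: 'n
  assumes "stochastic P" and "0 < \<beta>" and "\<beta> < 1" and "stopping_rule q"
  shows "(g_val P \<beta> q i = gS P \<beta> S i - (\<Sum>j\<in>S. wS P \<beta> S j * x0 P \<beta> q i j)
                                         + (\<Sum>j\<in>-S. wS P \<beta> S j * x1 P \<beta> q i j)) \<and>
    (f_val P \<beta> R q i = fS P \<beta> R S i - (\<Sum>j\<in>S. rS P \<beta> R S j * x0 P \<beta> q i j)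
                                         + (\<Sum>j\<in>-S. rS P \<beta> R S j * x1 P \<beta> q i j)) \<and>
    (f_val P \<beta> R q i - \<nu> * g_val P \<beta> q i
           = fS P \<beta> R S i - \<nu> * gS P \<beta> S i
             - (\<Sum>j\<in>S. (rS P \<beta> R S j - \<nu> * wS P \<beta> S j) * x0 P \<beta> q i j)
             + (\<Sum>j\<in>-S. (rS P \<beta> R S j - \<nu> * wS P \<beta> S j) * x1 P \<beta> q i j))"
proof -
  have g1: "g_val P \<beta> q i = f_val P \<beta> (\<lambda>_. 1) q i" for q i
    by (simp add: g_val_def f_val_def)
  have gS1: "gS P \<beta> S j = fS P \<beta> (\<lambda>_. 1) S j" for j
    by (simp add: gS_def fS_def g1)
  have wS1: "wS P \<beta> S j = rS P \<beta> (\<lambda>_. 1) S j" for j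
    by (simp add: wS_def rS_def gS1)
  have a: "g_val P \<beta> q i = gS P \<beta> S i - (\<Sum>j\<in>S. wS P \<beta> S j * x0 P \<beta> q i j)
                                         + (\<Sum>j\<in>-S. wS P \<beta> S j * x1 P \<beta> q i j)"
    unfolding g1 gS1 wS1 by (rule main_f[OF assms(1,4,2,3)])
  have b: "f_val P \<beta> R q i = fS P \<beta> R S i - (\<Sum>j\<in>S. rS P \<beta> R S j * x0 P \<beta> q i j)
                                         + (\<Sum>j\<in>-S. rS P \<beta> R S j * x1 P \<beta> q i j)"
    by (rule main_f[OF assms(1,4,2,3)])
  have s1: "(\<Sum>j\<in>S. (rS P \<beta> R S j - \<nu> * wS P \<beta> S j) * x0 P \<beta> q i j)
      = (\<Sum>j\<in>S. rS P \<beta> R S j * x0 P \<beta> q i j) - \<nu> * (\<Sum>j\<in>S. wS P \<beta> S j * x0 P \<beta> q i j)"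
    unfolding sum_distrib_left sum_subtractf[symmetric] by (rule sum.cong) (simp_all add: algebra_simps)
  have s2: "(\<Sum>j\<in>-S. (rS P \<beta> R S j - \<nu> * wS P \<beta> S j) * x1 P \<beta> q i j)
      = (\<Sum>j\<in>-S. rS P \<beta> R S j * x1 P \<beta> q i j) - \<nu> * (\<Sum>j\<in>-S. wS P \<beta> S j * x1 P \<beta> q i j)"
    unfolding sum_distrib_left sum_subtractf[symmetric] by (rule sum.cong) (simp_all add: algebra_simps)
  have c: "\<nu> * g_val P \<beta> q i = \<nu> * gS P \<beta> S i - \<nu> * (\<Sum>j\<in>S. wS P \<beta> S j * x0 P \<beta> q i j) + \<nu> * (\<Sum>j\<in>-S. wS P \<beta> S j * x1 P \<beta> q i j)"
    by (subst a) (simp add: algebra_simps)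
  show ?thesis using a b c unfolding s1 s2 by linarith
qed

end
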